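(* Let $(\mathcal A,d)$ be a DGA and let $a,b_1,\dots,b_n\in\mathcal A$ be closed elements such that the degree $|a|$ is even and $a\wedge b_i$ is exact for all $i$. Let $\xi_i$ be any elements with $d\xi_i=a\wedge b_i$. Then $$c=\sum_{i=1}^n \overline{\xi_1}\wedge\cdots\wedge\overline{\xi_{i-1}}\wedge b_i\wedge\xi_{i+1}\wedge\cdots\wedge\xi_n$$ is closed, where $\overline{\xi}=(-1)^{|\xi|}\xi$.
   Context: A DGA is a graded-commutative differential graded algebra over $\mathbb R$ with differential of degree $+1$ satisfying the graded Leibniz rule; $|x|$ denotes the degree of $x$. *)

theory Defs
  imports Main "HOL.Real_Vector_Spaces"
begin

definition is_DGA :: "(int \<Rightarrow> 'a::real_algebra_1 set) \<Rightarrow> ('a \<Rightarrow> 'a) \<Rightarrow> bool" where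
  "is_DGA G d \<longleftrightarrow>
     (\<forall>k. 0 \<in> G k) \<and>
     (\<forall>k x y. x \<in> G k \<longrightarrow> y \<in> G k \<longrightarrow> x + y \<in> G k) \<and>
     (\<forall>k r x. x \<in> G k \<longrightarrow> r *\<^sub>R x \<in> G k) \<and>
     (\<forall>x. \<exists>S f. finite S \<and> (\<forall>k\<in>S. f k \<in> G k) \<and> x = sum f S) \<and>
     (\<forall>S f. finite S \<longrightarrow> (\<forall>k\<in>S. f k \<in> G k) \<longrightarrow> sum f S = 0 \<longrightarrow> (\<forall>k\<in>S. f k = 0)) \<and>
     1 \<in> G 0 \<and>
     (\<forall>i j x y. x \<in> G i \<longrightarrow> y \<in> G j \<longrightarrow> x * y \<in> G (i + j)) \<and>
     (\<forall>i j x y. x \<in> G i \<longrightarrow> y \<in> G j \<longrightarrow> x * y = ((-1::real) powi (i * j)) *\<^sub>R (y * x)) \<and>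
     (\<forall>x y. d (x + y) = d x + d y) \<and>
     (\<forall>r x. d (r *\<^sub>R x) = r *\<^sub>R d x) \<and>
     (\<forall>k x. x \<in> G k \<longrightarrow> d x \<in> G (k + 1)) \<and>
     (\<forall>x. d (d x) = 0) \<and>
     (\<forall>i x y. x \<in> G i \<longrightarrow> d (x * y) = d x * y + ((-1::real) powi i) *\<^sub>R (x * d y))"

definition dga_bar :: "int \<Rightarrow> 'a::real_vector \<Rightarrow> 'a" where
  "dga_bar k x = ((-1::real) powi k) *\<^sub>R x"

end

theory Submission
  imports Defs
begin

definition sg :: "int \<Rightarrow> real" where "sg k = (if even k then 1 else -1)"

lemma powi_sg: "((-1::real) powi k) = sg k"
  by (simp add: power_int_minus_left sg_def)

lemma sg_add: "sg (x + y) = sg x * sg y"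
  by (auto simp: sg_def)

lemma sg_zero[simp]: "sg 0 = 1" by (simp add: sg_def)

locale dctx =
  fixes G :: "int \<Rightarrow> 'a::real_algebra_1 set" and d :: "'a \<Rightarrow> 'a"
    and a :: 'a and ka :: int and b :: "nat \<Rightarrow> 'a" and kb :: "nat \<Rightarrow> int"
    and xi :: "nat \<Rightarrow> 'a" and s :: "nat \<Rightarrow> int" and n :: nat
  assumes D: "is_DGA G d" and aG: "a \<in> G ka" and ka: "even ka" and da: "d a = 0"
    and bG: "\<And>i. 1 \<le> i \<Longrightarrow> i \<le> n \<Longrightarrow> b i \<in> G (kb i)"
    and db: "\<And>i. 1 \<le> i \<Longrightarrow> i \<le> n \<Longrightarrow> d (b i) = 0"
    and xG: "\<And>i. 1 \<le> i \<Longrightarrow> i \<le> n \<Longrightarrow> xi i \<in> G (s i)"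
    and dx: "\<And>i. 1 \<le> i \<Longrightarrow> i \<le> n \<Longrightarrow> d (xi i) = a * b i"
begin

lemma Dp: "(\<forall>k. 0 \<in> G k) \<and>
     (\<forall>k x y. x \<in> G k \<longrightarrow> y \<in> G k \<longrightarrow> x + y \<in> G k) \<and>
     (\<forall>k r x. x \<in> G k \<longrightarrow> r *\<^sub>R x \<in> G k) \<and>
     (\<forall>x. \<exists>S f. finite S \<and> (\<forall>k\<in>S. f k \<in> G k) \<and> x = sum f S) \<and>
     (\<forall>S f. finite S \<longrightarrow> (\<forall>k\<in>S. f k \<in> G k) \<longrightarrow> sum f S = 0 \<longrightarrow> (\<forall>k\<in>S. f k = 0)) \<and>
     1 \<in> G 0 \<and>
     (\<forall>i j x y. x \<in> G i \<longrightarrow> y \<in> G j \<longrightarrow> x * y \<in> G (i + j)) \<and>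
     (\<forall>i j x y. x \<in> G i \<longrightarrow> y \<in> G j \<longrightarrow> x * y = ((-1::real) powi (i * j)) *\<^sub>R (y * x)) \<and>
     (\<forall>x y. d (x + y) = d x + d y) \<and>
     (\<forall>r x. d (r *\<^sub>R x) = r *\<^sub>R d x) \<and>
     (\<forall>k x. x \<in> G k \<longrightarrow> d x \<in> G (k + 1)) \<and>
     (\<forall>x. d (d x) = 0) \<and>
     (\<forall>i x y. x \<in> G i \<longrightarrow> d (x * y) = d x * y + ((-1::real) powi i) *\<^sub>R (x * d y))"
  using D unfolding is_DGA_def by assumption

lemma G0: "0 \<in> G k" using Dp[THEN conjunct1] by blast
lemma Gadd: "x \<in> G k \<Longrightarrow> y \<in> G k \<Longrightarrow> x + y \<in> G k" using Dp[THEN conjunct2, THEN conjunct1] by blast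
lemma Gscale: "x \<in> G k \<Longrightarrow> r *\<^sub>R x \<in> G k" using Dp[THEN conjunct2, THEN conjunct2, THEN conjunct1] by blast
lemma Gunique: "finite S \<Longrightarrow> (\<forall>k\<in>S. f k \<in> G k) \<Longrightarrow> sum f S = 0 \<Longrightarrow> k\<in>S \<Longrightarrow> f k = 0"
  using Dp[THEN conjunct2, THEN conjunct2, THEN conjunct2, THEN conjunct2, THEN conjunct1] by blast
lemma G1: "1 \<in> G 0" using Dp[THEN conjunct2, THEN conjunct2, THEN conjunct2, THEN conjunct2, THEN conjunct2, THEN conjunct1] by blast
lemma Gmult: "x \<in> G i \<Longrightarrow> y \<in> G j \<Longrightarrow> x * y \<in> G (i + j)" using Dp[THEN conjunct2, THEN conjunct2, THEN conjunct2, THEN conjunct2, THEN conjunct2, THEN conjunct2, THEN conjunct1] by blast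
lemma Gcomm: "x \<in> G i \<Longrightarrow> y \<in> G j \<Longrightarrow> x * y = ((-1::real) powi (i * j)) *\<^sub>R (y * x)"
  using Dp[THEN conjunct2, THEN conjunct2, THEN conjunct2, THEN conjunct2, THEN conjunct2, THEN conjunct2, THEN conjunct2, THEN conjunct1] by blast
lemma dadd: "d (x + y) = d x + d y" using Dp[THEN conjunct2, THEN conjunct2, THEN conjunct2, THEN conjunct2, THEN conjunct2, THEN conjunct2, THEN conjunct2, THEN conjunct2, THEN conjunct1] by blast
lemma dscale: "d (r *\<^sub>R x) = r *\<^sub>R d x" using Dp[THEN conjunct2, THEN conjunct2, THEN conjunct2, THEN conjunct2, THEN conjunct2, THEN conjunct2, THEN conjunct2, THEN conjunct2, THEN conjunct2, THEN conjunct1] by blast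
lemma dG: "x \<in> G k \<Longrightarrow> d x \<in> G (k + 1)" using Dp[THEN conjunct2, THEN conjunct2, THEN conjunct2, THEN conjunct2, THEN conjunct2, THEN conjunct2, THEN conjunct2, THEN conjunct2, THEN conjunct2, THEN conjunct2, THEN conjunct1] by blast
lemma leib: "x \<in> G i \<Longrightarrow> d (x * y) = d x * y + sg i *\<^sub>R (x * d y)"
  using Dp[THEN conjunct2, THEN conjunct2, THEN conjunct2, THEN conjunct2, THEN conjunct2, THEN conjunct2, THEN conjunct2, THEN conjunct2, THEN conjunct2, THEN conjunct2, THEN conjunct2, THEN conjunct2] unfolding powi_sg by blast

lemma d0: "d 0 = 0"
  using dadd[of 0 0] by simp

lemma dsum: "d (sum f A) = (\<Sum>x\<in>A. d (f x))"
  by (induct A rule: infinite_finite_induct) (auto simp: d0 dadd)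

lemma d1: "d 1 = 0"
proof -
  have "d 1 = d 1 + d 1" using leib[OF G1, of 1] by simp
  then show ?thesis by simp
qed

lemma deg_unique:
  assumes "x \<in> G i" "x \<in> G j" "x \<noteq> 0" shows "i = j"
proof (rule ccontr)
  assume ne: "i \<noteq> j"
  define f where "f = (\<lambda>k. if k = i then x else - x)"
  have mx: "- x \<in> G j" using Gscale[OF assms(2), of "-1"] by simp
  have "\<forall>k\<in>{i,j}. f k \<in> G k" using assms(1) mx ne by (auto simp: f_def)
  moreover have "sum f {i,j} = 0" using ne by (simp add: f_def)
  ultimately have "f i = 0" using Gunique[of "{i,j}" f i] by auto
  then show False using assms(3) by (simp add: f_def)
qed

lemma comm_a: "x \<in> G k \<Longrightarrow> a * x = x * a"
proof -
  assume "x \<in> G k"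
  then have "a * x = ((-1::real) powi (ka * k)) *\<^sub>R (x * a)" using Gcomm aG by blast
  moreover have "even (ka * k)" using ka by simp
  ultimately show ?thesis by (simp add: powi_sg sg_def)
qed

definition X :: "nat \<Rightarrow> nat \<Rightarrow> 'a" where "X l m = prod_list (map xi [l..<m])"
definition S :: "nat \<Rightarrow> nat \<Rightarrow> int" where "S l m = (\<Sum>t\<in>{l..<m}. s t)"
definition BX :: "nat \<Rightarrow> 'a" where "BX m = prod_list (map (\<lambda>j. dga_bar (s j) (xi j)) [1..<m])"

lemma X_Suc: "l \<le> m \<Longrightarrow> X l (Suc m) = X l m * xi m"
  by (simp add: X_def)
lemma X_le: "m \<le> l \<Longrightarrow> X l m = 1"
  by (simp add: X_def)
lemma S_Suc: "l \<le> m \<Longrightarrow> S l (Suc m) = S l m + s m"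
  by (simp add: S_def)
lemma S_le: "m \<le> l \<Longrightarrow> S l m = 0"
  by (simp add: S_def)

lemma X_G: "1 \<le> l \<Longrightarrow> m \<le> Suc n \<Longrightarrow> X l m \<in> G (S l m)"
proof (induct m)
  case 0 then show ?case by (simp add: X_le S_le G1)
next
  case (Suc m)
  show ?case
  proof (cases "l \<le> m")
    case True
    then show ?thesis using Suc by (simp add: X_Suc S_Suc Gmult xG)
  next
    case False
    then show ?thesis by (simp add: X_le S_le G1)
  qed
qed

lemma BX_eq: "BX m = sg (S 1 m) *\<^sub>R X 1 m"
proof (induct m)
  case 0 then show ?case by (simp add: BX_def X_def S_def)
next
  case (Suc m)
  show ?case
  proof (cases "1 \<le> m")
    case True
    have "BX (Suc m) = BX m * dga_bar (s m) (xi m)" using True by (simp add: BX_def)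
    also have "\<dots> = (sg (S 1 m) * sg (s m)) *\<^sub>R (X 1 m * xi m)"
      using Suc by (simp add: dga_bar_def powi_sg)
    finally show ?thesis using True by (simp add: X_Suc S_Suc sg_add)
  next
    case False
    then show ?thesis by (simp add: BX_def X_def S_def)
  qed
qed

lemma dX: "1 \<le> l \<Longrightarrow> m \<le> Suc n \<Longrightarrow>
  d (X l m) = (\<Sum>j\<in>{l..<m}. sg (S l j) *\<^sub>R (X l j * (a * b j) * X (Suc j) m))"
proof (induct m)
  case 0 then show ?case by (simp add: X_le d1)
next
  case (Suc m)
  show ?case
  proof (cases "l \<le> m")
    case True
    have m1: "1 \<le> m" "m \<le> n" using True Suc by auto
    have "d (X l (Suc m)) = d (X l m * xi m)" using True by (simp add: X_Suc)
    also have "\<dots> = d (X l m) * xi m + sg (S l m) *\<^sub>R (X l m * (a * b m))"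
      using leib[OF X_G[of l m]] Suc m1 dx by simp
    also have "d (X l m) * xi m = (\<Sum>j\<in>{l..<m}. sg (S l j) *\<^sub>R (X l j * (a * b j) * X (Suc j) (Suc m)))"
      using Suc by (simp add: sum_distrib_right X_Suc mult.assoc)
    finally show ?thesis using True by (simp add: X_le mult.assoc)
  next
    case False
    then show ?thesis by (simp add: X_le d1)
  qed
qed

definition T :: "nat \<Rightarrow> nat \<Rightarrow> 'a" where "T m i = BX i * b i * X (Suc i) (Suc m)"
definition c :: "nat \<Rightarrow> 'a" where "c m = (\<Sum>i\<in>{1..m}. T m i)"

lemma c_Suc: "c (Suc m) = c m * xi (Suc m) + BX (Suc m) * b (Suc m)"
proof -
  have "(\<Sum>i\<in>{1..m}. T (Suc m) i) = (\<Sum>i\<in>{1..m}. T m i * xi (Suc m))"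
    by (rule sum.cong) (auto simp: T_def X_Suc mult.assoc)
  moreover have "T (Suc m) (Suc m) = BX (Suc m) * b (Suc m)" by (simp add: T_def X_le)
  ultimately show ?thesis by (simp add: c_def sum_distrib_right)
qed

lemma T_G: "1 \<le> i \<Longrightarrow> i \<le> m \<Longrightarrow> m \<le> n \<Longrightarrow> T m i \<in> G (S 1 i + kb i + S (Suc i) (Suc m))"
  unfolding T_def BX_eq
  by (intro Gmult Gscale X_G bG) auto

lemma S_split: "1 \<le> i \<Longrightarrow> i \<le> m \<Longrightarrow> S 1 (Suc m) = S 1 i + s i + S (Suc i) (Suc m)"
proof -
  assume "1 \<le> i" "i \<le> m"
  then have "S 1 (Suc m) = S 1 i + S i (Suc m)"
    unfolding S_def by (simp add: sum.atLeastLessThan_concat)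
  moreover have "S i (Suc m) = s i + S (Suc i) (Suc m)"
    using \<open>i \<le> m\<close> unfolding S_def by (intro sum.atLeast_Suc_lessThan) simp
  ultimately show ?thesis by simp
qed

lemma c_closed: "m \<le> n \<Longrightarrow> d (c m) = 0"
proof (induct m)
  case 0 then show ?case by (simp add: c_def d0)
next
  case (Suc m)
  let ?b = "b (Suc m)" and ?x = "xi (Suc m)"
  have mn: "m < n" using Suc by simp
  have IH: "d (c m) = 0" using Suc mn by simp
  define Dg where "Dg i = S 1 i + kb i + S (Suc i) (Suc m)" for i
  define Z where "Z i = X 1 i * (a * b i) * X (Suc i) (Suc m) * ?b" for i
  have dxm: "d ?x = a * ?b" using dx mn by simp
  have dbm: "d ?b = 0" using db mn by simp
  have A: "d (c m * ?x) = (\<Sum>i\<in>{1..m}. sg (Dg i) *\<^sub>R (T m i * (a * ?b)))"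
  proof -
    have "d (c m * ?x) = (\<Sum>i\<in>{1..m}. d (T m i * ?x))"
      by (simp add: c_def sum_distrib_right dsum)
    also have "\<dots> = (\<Sum>i\<in>{1..m}. d (T m i) * ?x + sg (Dg i) *\<^sub>R (T m i * (a * ?b)))"
      proof (rule sum.cong)
      fix i assume "i \<in> {1..m}"
      then have "T m i \<in> G (Dg i)" unfolding Dg_def using mn by (intro T_G) auto
      then show "d (T m i * ?x) = d (T m i) * ?x + sg (Dg i) *\<^sub>R (T m i * (a * ?b))"
        using leib dxm by simp
    qed simp
    also have "\<dots> = d (c m) * ?x + (\<Sum>i\<in>{1..m}. sg (Dg i) *\<^sub>R (T m i * (a * ?b)))"
      by (simp add: sum.distrib c_def dsum sum_distrib_right)
    finally show ?thesis using IH by simp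
  qed
  have B: "d (BX (Suc m) * ?b) = (\<Sum>i\<in>{1..m}. (sg (S 1 (Suc m)) * sg (S 1 i)) *\<^sub>R Z i)"
  proof -
    have "d (BX (Suc m) * ?b) = d (BX (Suc m)) * ?b"
      using leib[OF Gscale[OF X_G[of 1 "Suc m"]], of _ ?b] mn dbm by (simp add: BX_eq)
    also have "\<dots> = sg (S 1 (Suc m)) *\<^sub>R (d (X 1 (Suc m)) * ?b)" by (simp add: BX_eq dscale)
    also have "d (X 1 (Suc m)) = (\<Sum>j\<in>{1..<Suc m}. sg (S 1 j) *\<^sub>R (X 1 j * (a * b j) * X (Suc j) (Suc m)))"
      using mn by (intro dX) auto
    also have "{1..<Suc m} = {1..m}" by auto
    finally show ?thesis
      unfolding sum_distrib_right scaleR_sum_right by (simp add: Z_def)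
  qed
  have C: "sg (Dg i) *\<^sub>R (T m i * (a * ?b)) + (sg (S 1 (Suc m)) * sg (S 1 i)) *\<^sub>R Z i = 0"
    if i: "i \<in> {1..m}" for i
  proof -
    have i1: "1 \<le> i" "i \<le> n" using i mn by auto
    have YG: "X (Suc i) (Suc m) \<in> G (S (Suc i) (Suc m))" using X_G mn by simp
    have "T m i * (a * ?b) = sg (S 1 i) *\<^sub>R (X 1 i * b i * (X (Suc i) (Suc m) * a) * ?b)"
      by (simp add: T_def BX_eq mult.assoc)
    also have "X (Suc i) (Suc m) * a = a * X (Suc i) (Suc m)" using comm_a[OF YG] by simp
    also have "X 1 i * b i * (a * X (Suc i) (Suc m)) * ?b = X 1 i * (b i * a) * X (Suc i) (Suc m) * ?b"
      by (simp add: mult.assoc)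
    also have "b i * a = a * b i" using comm_a[OF bG[OF i1]] by simp
    finally have T1: "T m i * (a * ?b) = sg (S 1 i) *\<^sub>R Z i" by (simp add: Z_def)
    show ?thesis
    proof (cases "a * b i = 0")
      case True
      then show ?thesis by (simp add: T1 Z_def)
    next
      case False
      have "a * b i \<in> G (ka + kb i)" using Gmult[OF aG bG[OF i1]] .
      moreover have "a * b i \<in> G (s i + 1)" using dG[OF xG[OF i1]] dx[OF i1] by simp
      ultimately have eq: "s i + 1 = ka + kb i" using deg_unique False by blast
      have "odd (s i + kb i)" using eq ka by presburger
      then have "sg (s i) = - sg (kb i)" by (auto simp: sg_def)
      then have "sg (Dg i) * sg (S 1 i) + sg (S 1 (Suc m)) * sg (S 1 i) = 0"
        using S_split[of i m] i by (simp add: Dg_def sg_add algebra_simps)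
      then show ?thesis by (simp add: T1 scaleR_add_left[symmetric] del: scaleR_add_left)
    qed
  qed
  have "d (c (Suc m)) = d (c m * ?x) + d (BX (Suc m) * ?b)" by (simp add: c_Suc dadd)
  also have "\<dots> = (\<Sum>i\<in>{1..m}. sg (Dg i) *\<^sub>R (T m i * (a * ?b)) + (sg (S 1 (Suc m)) * sg (S 1 i)) *\<^sub>R Z i)"
    by (simp add: A B sum.distrib)
  also have "\<dots> = 0" using C by simp
  finally show ?case .
qed

end

theorem proposition2p2:
  fixes G :: "int \<Rightarrow> 'a::real_algebra_1 set" and d :: "'a \<Rightarrow> 'a"
    and a :: 'a and b xi :: "nat \<Rightarrow> 'a" and n :: nat
    and ka :: int and kb kxi :: "nat \<Rightarrow> int"
  assumes "is_DGA G d"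
    and "a \<in> G ka" and "even ka" and "d a = 0"
    and "\<forall>i\<in>{1..n}. b i \<in> G (kb i) \<and> d (b i) = 0"
    and "\<forall>i\<in>{1..n}. \<exists>y. d y = a * b i"
    and "\<forall>i\<in>{1..n}. xi i \<in> G (kxi i) \<and> d (xi i) = a * b i"
  shows "d (\<Sum>i = 1..n. prod_list (map (\<lambda>j. if j < i then dga_bar (kxi j) (xi j)
                                             else if j = i then b i else xi j) [1..<Suc n])) = 0"
proof -
  interpret dctx G d a ka b kb xi kxi n
    using assms by unfold_locales auto
  have "(\<Sum>i = 1..n. prod_list (map (\<lambda>j. if j < i then dga_bar (kxi j) (xi j)
                                             else if j = i then b i else xi j) [1..<Suc n])) = c n"
    unfolding c_def
  proof (rule sum.cong)
    fix i assume i: "i \<in> {1..n}"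
    have "[1..<Suc n] = [1..<i] @ [i..<Suc n]"
      using upt_add_eq_append[of 1 i "Suc n - i"] i by simp
    also have "[i..<Suc n] = i # [Suc i..<Suc n]" using i by (simp add: upt_conv_Cons)
    finally have L: "[1..<Suc n] = [1..<i] @ i # [Suc i..<Suc n]" .
    have M1: "map (\<lambda>j. if j < i then dga_bar (kxi j) (xi j) else if j = i then b i else xi j) [1..<i]
        = map (\<lambda>j. dga_bar (kxi j) (xi j)) [1..<i]" by (rule map_cong) auto
    have M2: "map (\<lambda>j. if j < i then dga_bar (kxi j) (xi j) else if j = i then b i else xi j) [Suc i..<Suc n]
        = map xi [Suc i..<Suc n]" by (rule map_cong) auto
    show "prod_list (map (\<lambda>j. if j < i then dga_bar (kxi j) (xi j)
                                             else if j = i then b i else xi j) [1..<Suc n]) = T n i"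
      unfolding L by (simp only: map_append list.map M1 M2 prod_list.append prod_list.Cons)
        (simp add: T_def BX_def X_def mult.assoc)
  qed simp
  then show ?thesis using c_closed by simp
qed

end
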